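(* Let $R_1,\dots,R_m$ be rectangles with integer dimensions and let $C_1,\dots,C_t$ be horizontal containers. Suppose the rectangles can be packed into the containers when horizontal slicing is allowed, i.e. when each $R_i$ of width $w(R_i)$ and height $h(R_i)$ is replaced by $h(R_i)$ slices of width $w(R_i)$ and height $1$, and the slices are packed into the containers. Then all but at most $t$ of the rectangles $R_1,\dots,R_m$ can be packed (unsliced) into the same containers. The symmetric statement holds for vertical containers with vertical slicing into width-$1$ slices.
   Context: A horizontal container $C$ of width $w(C)$ and height $h(C)$ is an axis-aligned rectangular region in which rectangles are packed one on top of the other from bottom to top (every horizontal line meets at most one packed rectangle); a set of (pieces of) rectangles can be packed in it iff each has width at most $w(C)$ and their heights sum to at most $h(C)$. A vertical container is the analogous region in which rectangles are packed side by side from left to right (every vertical line meets at most one packed rectangle): a set fits iff each has height at most the container height and their widths sum to at most the container width. No rotations are allowed. *)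

theory Defs
  imports Complex_Main
begin

text \<open>Horizontal containers: items stacked bottom to top; a set fits iff each item has
  width at most the container width and the heights sum to at most the container height.\<close>
definition horiz_packable ::
  "'i set \<Rightarrow> ('i \<Rightarrow> nat) \<Rightarrow> ('i \<Rightarrow> nat) \<Rightarrow> nat \<Rightarrow> (nat \<Rightarrow> real) \<Rightarrow> (nat \<Rightarrow> real) \<Rightarrow> bool"
where
  "horiz_packable I wd ht t cw ch \<longleftrightarrow>
     (\<exists>a :: 'i \<Rightarrow> nat.
        (\<forall>i\<in>I. a i < t \<and> real (wd i) \<le> cw (a i)) \<and>
        (\<forall>c<t. real (\<Sum>i\<in>{i\<in>I. a i = c}. ht i) \<le> ch c))"

text \<open>Vertical containers: items placed side by side; a set fits iff each item has
  height at most the container height and the widths sum to at most the container width.\<close>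
definition vert_packable ::
  "'i set \<Rightarrow> ('i \<Rightarrow> nat) \<Rightarrow> ('i \<Rightarrow> nat) \<Rightarrow> nat \<Rightarrow> (nat \<Rightarrow> real) \<Rightarrow> (nat \<Rightarrow> real) \<Rightarrow> bool"
where
  "vert_packable I wd ht t cw ch \<longleftrightarrow>
     (\<exists>a :: 'i \<Rightarrow> nat.
        (\<forall>i\<in>I. a i < t \<and> real (ht i) \<le> ch (a i)) \<and>
        (\<forall>c<t. real (\<Sum>i\<in>{i\<in>I. a i = c}. wd i) \<le> cw c))"

text \<open>Horizontal slices of rectangles 0..m-1: rectangle i gives h i slices (i,j), j < h i,
  each of width w i and height 1.\<close>
definition hslices :: "nat \<Rightarrow> (nat \<Rightarrow> nat) \<Rightarrow> (nat \<times> nat) set" where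
  "hslices m h = {(i, j). i < m \<and> j < h i}"

end

theory Submission imports Defs begin

definition valid :: "nat set \<Rightarrow> nat set \<Rightarrow> (nat\<Rightarrow>nat) \<Rightarrow> (nat\<Rightarrow>nat) \<Rightarrow> (nat\<Rightarrow>real) \<Rightarrow> (nat\<Rightarrow>real) \<Rightarrow> (nat\<Rightarrow>nat\<Rightarrow>nat) \<Rightarrow> bool" where
"valid R C w h cw ch n \<longleftrightarrow> (\<forall>i\<in>R. (\<Sum>c\<in>C. n i c) = h i) \<and> (\<forall>i\<in>R. \<forall>c\<in>C. 0 < n i c \<longrightarrow> real (w i) \<le> cw c) \<and> (\<forall>c\<in>C. real (\<Sum>i\<in>R. n i c) \<le> ch c)"

lemma sum_pos_ex:
  fixes f :: "'a \<Rightarrow> nat"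
  assumes "0 < sum f K" shows "\<exists>k\<in>K. 0 < f k"
proof (rule ccontr)
  assume "\<not> (\<exists>k\<in>K. 0 < f k)"
  then have "\<forall>k\<in>K. f k = 0" by simp
  then show False using assms by simp
qed

lemma sum_two_change:
  fixes f g :: "'a \<Rightarrow> nat"
  assumes "finite K" "p \<in> K" "q \<in> K" "p \<noteq> q" "g p + g q = f p + f q" "\<And>y. y \<in> K \<Longrightarrow> y \<noteq> p \<Longrightarrow> y \<noteq> q \<Longrightarrow> g y = f y"
  shows "sum g K = sum f K"
proof -
  have "sum g K = g p + g q + sum g (K - {p} - {q})"
    using assms by (simp add: sum.remove[of K p] sum.remove[of "K - {p}" q])
  moreover have "sum f K = f p + f q + sum f (K - {p} - {q})"
    using assms by (simp add: sum.remove[of K p] sum.remove[of "K - {p}" q])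
  moreover have "sum g (K - {p} - {q}) = sum f (K - {p} - {q})"
    using assms by (intro sum.cong) auto
  ultimately show ?thesis using assms by simp
qed

lemma exchange_aux:
  assumes fR: "finite R" and fC: "finite C" and xC: "x \<notin> C" and wid: "\<forall>c\<in>C. cw c \<le> cw x"
    and DR: "D \<subseteq> R" and up: "\<forall>i\<in>D. \<forall>j\<in>R-D. w j \<le> w i"
  shows "\<forall>n. (\<Sum>j\<in>R-D. n j x) = A \<longrightarrow> (\<Sum>i\<in>R. n i x) \<le> (\<Sum>i\<in>D. h i) \<longrightarrow>
           valid R (insert x C) w h cw ch n \<longrightarrow> (\<exists>n'. valid (R-D) C w h cw ch n')"
proof (induction A)
  case 0
  show ?case
  proof (intro allI impI)
    fix n assume A0: "(\<Sum>j\<in>R-D. n j x) = 0" and cap: "(\<Sum>i\<in>R. n i x) \<le> (\<Sum>i\<in>D. h i)"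
      and v: "valid R (insert x C) w h cw ch n"
    have z: "\<forall>j\<in>R-D. n j x = 0" using A0 fR by simp
    have "valid (R-D) C w h cw ch n"
      unfolding valid_def
    proof (intro conjI ballI impI)
      fix i assume i: "i \<in> R - D"
      have "(\<Sum>c\<in>insert x C. n i c) = h i" using v i unfolding valid_def by auto
      then show "(\<Sum>c\<in>C. n i c) = h i" using z i fC xC by simp
    next
      fix i c assume "i \<in> R - D" "c \<in> C" "0 < n i c"
      then show "real (w i) \<le> cw c" using v unfolding valid_def by auto
    next
      fix c assume c: "c \<in> C"
      have "(\<Sum>i\<in>R-D. n i c) \<le> (\<Sum>i\<in>R. n i c)" using fR by (intro sum_mono2) auto
      moreover have "real (\<Sum>i\<in>R. n i c) \<le> ch c" using v c unfolding valid_def by auto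
      ultimately show "real (\<Sum>i\<in>R-D. n i c) \<le> ch c" by linarith
    qed
    then show "\<exists>n'. valid (R-D) C w h cw ch n'" by blast
  qed
next
  case (Suc A)
  show ?case
  proof (intro allI impI)
    fix n assume AS: "(\<Sum>j\<in>R-D. n j x) = Suc A" and cap: "(\<Sum>i\<in>R. n i x) \<le> (\<Sum>i\<in>D. h i)"
      and v: "valid R (insert x C) w h cw ch n"
    have fD: "finite D" using fR DR finite_subset by blast
    obtain j where j: "j \<in> R - D" "0 < n j x"
    proof -
      have "\<not> (\<forall>j\<in>R-D. n j x = 0)" using AS by (metis Zero_neq_Suc sum.neutral)
      then show ?thesis using that by auto
    qed
    have rows: "\<forall>i\<in>R. h i = n i x + (\<Sum>c\<in>C. n i c)"
      using v fC xC unfolding valid_def by simp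
    have "(\<Sum>i\<in>D. h i) = (\<Sum>i\<in>D. n i x) + (\<Sum>i\<in>D. \<Sum>c\<in>C. n i c)"
      using rows DR by (simp add: sum.distrib[symmetric] subset_iff)
    moreover have "(\<Sum>i\<in>R. n i x) = (\<Sum>i\<in>D. n i x) + (\<Sum>i\<in>R-D. n i x)"
      using fR DR by (metis sum.subset_diff add.commute)
    ultimately have "(\<Sum>i\<in>D. \<Sum>c\<in>C. n i c) > 0" using cap AS by linarith
    then have "\<exists>i\<in>D. 0 < (\<Sum>c\<in>C. n i c)"
      by (rule contrapos_pp) (simp add: not_less)
    then obtain i where i0: "i \<in> D" "0 < (\<Sum>c\<in>C. n i c)" by blast
    have "\<exists>c\<in>C. 0 < n i c"
    proof (rule ccontr)
      assume "\<not> (\<exists>c\<in>C. 0 < n i c)"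
      then have "\<forall>c\<in>C. n i c = 0" by simp
      then show False using i0(2) by simp
    qed
    then obtain c where c0: "c \<in> C" "0 < n i c" by blast
    note ic = i0(1) c0
    have ij: "i \<noteq> j" using ic j by auto
    have xc: "x \<noteq> c" using ic xC by auto
    define n1 where "n1 = (\<lambda>k c'. if k = j \<and> c' = x then n k c' - 1 else if k = j \<and> c' = c then n k c' + 1
        else if k = i \<and> c' = x then n k c' + 1 else if k = i \<and> c' = c then n k c' - 1 else n k c')"
    have wi: "real (w i) \<le> cw c" using v ic DR unfolding valid_def by auto
    have wj: "w j \<le> w i" using up ic j by auto
    have v1: "valid R (insert x C) w h cw ch n1"
      unfolding valid_def
    proof (intro conjI ballI impI)
      fix k assume k: "k \<in> R"
      have "(\<Sum>c'\<in>insert x C. n1 k c') = (\<Sum>c'\<in>insert x C. n k c')"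
      proof (cases "k = j \<or> k = i")
        case True
        show ?thesis
        proof (rule sum_two_change[where p = x and q = c])
          show "n1 k x + n1 k c = n k x + n k c" using True j ic ij xc by (auto simp: n1_def)
          show "\<And>y. y \<in> insert x C \<Longrightarrow> y \<noteq> x \<Longrightarrow> y \<noteq> c \<Longrightarrow> n1 k y = n k y"
            by (auto simp: n1_def)
        qed (use fC ic xc in auto)
      next
        case False
        then show ?thesis by (intro sum.cong) (auto simp: n1_def)
      qed
      then show "(\<Sum>c'\<in>insert x C. n1 k c') = h k" using v k unfolding valid_def by auto
    next
      fix k c' assume k: "k \<in> R" and c': "c' \<in> insert x C" and pos: "0 < n1 k c'"
      show "real (w k) \<le> cw c'"
      proof -
        consider "k = j \<and> c' = c" | "k = i \<and> c' = x" | "0 < n k c'"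
          using pos xc ij unfolding n1_def by (auto split: if_splits)
        then show ?thesis
        proof cases
          case 1 then show ?thesis using wi wj by simp
        next
          case 2 then show ?thesis using wi wid ic by force
        next
          case 3 then show ?thesis using v k c' unfolding valid_def by auto
        qed
      qed
    next
      fix c' assume c': "c' \<in> insert x C"
      have "(\<Sum>k\<in>R. n1 k c') = (\<Sum>k\<in>R. n k c')"
      proof (cases "c' = x \<or> c' = c")
        case True
        show ?thesis
        proof (rule sum_two_change[where p = j and q = i])
          show "n1 j c' + n1 i c' = n j c' + n i c'" using True j ic ij xc by (auto simp: n1_def)
          show "\<And>y. y \<in> R \<Longrightarrow> y \<noteq> j \<Longrightarrow> y \<noteq> i \<Longrightarrow> n1 y c' = n y c'"
            by (auto simp: n1_def)
        qed (use fR ic j ij DR in auto)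
      next
        case False
        then show ?thesis by (intro sum.cong) (auto simp: n1_def)
      qed
      then show "real (\<Sum>k\<in>R. n1 k c') \<le> ch c'" using v c' unfolding valid_def by auto
    qed
    have "(\<Sum>k\<in>R. n1 k x) = (\<Sum>k\<in>R. n k x)"
      proof (rule sum_two_change[where p = j and q = i])
        show "n1 j x + n1 i x = n j x + n i x" using j ic ij xc by (auto simp: n1_def)
        show "\<And>y. y \<in> R \<Longrightarrow> y \<noteq> j \<Longrightarrow> y \<noteq> i \<Longrightarrow> n1 y x = n y x"
          by (auto simp: n1_def)
      qed (use fR ic j ij DR in auto)
    then have cap1: "(\<Sum>k\<in>R. n1 k x) \<le> (\<Sum>i\<in>D. h i)" using cap by simp
    have "(\<Sum>k\<in>R-D. n1 k x) = n1 j x + (\<Sum>k\<in>R-D-{j}. n1 k x)"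
      using fR j by (simp add: sum.remove)
    also have "(\<Sum>k\<in>R-D-{j}. n1 k x) = (\<Sum>k\<in>R-D-{j}. n k x)"
      using ic by (intro sum.cong) (auto simp: n1_def)
    also have "n1 j x = n j x - 1" by (simp add: n1_def)
    finally have "(\<Sum>k\<in>R-D. n1 k x) + 1 = (\<Sum>k\<in>R-D. n k x)"
      using fR j by (simp add: sum.remove)
    then have "(\<Sum>k\<in>R-D. n1 k x) = A" using AS by simp
    then show "\<exists>n'. valid (R-D) C w h cw ch n'" using Suc.IH cap1 v1 by blast
  qed
qed

lemma greedy:
  fixes h w :: "nat \<Rightarrow> nat"
  assumes "finite R"
  shows "\<forall>X::real. 0 \<le> X \<longrightarrow> X < real (\<Sum>i\<in>R. h i) \<longrightarrow>
    (\<exists>T d. T \<subseteq> R \<and> d \<in> R - T \<and> real (\<Sum>i\<in>T. h i) \<le> X \<and> X < real (\<Sum>i\<in>T. h i) + real (h d)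
       \<and> (\<forall>i\<in>insert d T. \<forall>j\<in>R - insert d T. w j \<le> w i))"
  using assms
proof (induction R rule: finite_ranking_induct[where f = w])
  case empty
  then show ?case by simp
next
  case (insert x S)
  show ?case
  proof (cases "x \<in> S")
    case True
    have "insert x S = S" using True by blast
    then show ?thesis using insert.IH by (simp only:)
  next
    case xS: False
    show ?thesis
    proof (intro allI impI)
      fix X :: real assume X0: "0 \<le> X" and XS: "X < real (\<Sum>i\<in>insert x S. h i)"
      show "\<exists>T d. T \<subseteq> insert x S \<and> d \<in> insert x S - T \<and> real (\<Sum>i\<in>T. h i) \<le> X \<and> X < real (\<Sum>i\<in>T. h i) + real (h d)
       \<and> (\<forall>i\<in>insert d T. \<forall>j\<in>insert x S - insert d T. w j \<le> w i)"
      proof (cases "X < real (h x)")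
        case True
        show ?thesis
        proof (rule exI[of _ "{}"], rule exI[of _ x], intro conjI)
          show "\<forall>i\<in>insert x {}. \<forall>j\<in>insert x S - insert x {}. w j \<le> w i"
            using insert.hyps(2) by blast
        qed (use True X0 in simp_all)
      next
        case False
        have sumins: "(\<Sum>i\<in>insert x S. h i) = h x + (\<Sum>i\<in>S. h i)" using xS insert.hyps(1) by simp
        have a1: "0 \<le> X - real (h x)" using False by linarith
        have a2: "X - real (h x) < real (\<Sum>i\<in>S. h i)" using XS sumins by simp
        obtain T d where Td: "T \<subseteq> S" "d \<in> S - T" "real (\<Sum>i\<in>T. h i) \<le> X - real (h x)"
          "X - real (h x) < real (\<Sum>i\<in>T. h i) + real (h d)"
          "\<forall>i\<in>insert d T. \<forall>j\<in>S - insert d T. w j \<le> w i"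
          using insert.IH[rule_format, OF a1 a2] by blast
        have fT: "finite T" using Td(1) insert.hyps(1) finite_subset by blast
        have xT: "x \<notin> T" using Td(1) xS by auto
        have s2: "(\<Sum>i\<in>insert x T. h i) = h x + (\<Sum>i\<in>T. h i)" using fT xT by simp
        show ?thesis
        proof (rule exI[of _ "insert x T"], rule exI[of _ d], intro conjI)
          show "insert x T \<subseteq> insert x S" using Td(1) by auto
          show "d \<in> insert x S - insert x T" using Td(2) xS by auto
          show "real (\<Sum>i\<in>insert x T. h i) \<le> X" using s2 Td(3) by simp
          show "X < real (\<Sum>i\<in>insert x T. h i) + real (h d)" using s2 Td(4) by simp
          show "\<forall>i\<in>insert d (insert x T). \<forall>j\<in>insert x S - insert d (insert x T). w j \<le> w i"
          proof (intro ballI)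
            fix i j assume i: "i \<in> insert d (insert x T)" and j: "j \<in> insert x S - insert d (insert x T)"
            then have jS: "j \<in> S - insert d T" by blast
            show "w j \<le> w i"
            proof (cases "i = x")
              case True then show ?thesis using insert.hyps(2) jS by blast
            next
              case False then have "i \<in> insert d T" using i by blast
              then show ?thesis using Td(5) jS by blast
            qed
          qed
        qed
      qed
    qed
  qed
qed

lemma main:
  fixes w h :: "nat \<Rightarrow> nat" and cw ch :: "nat \<Rightarrow> real"
  assumes "finite C"
  shows "\<forall>R n. finite R \<longrightarrow> (\<forall>i\<in>R. 0 < h i) \<longrightarrow> valid R C w h cw ch n \<longrightarrow>
    (\<exists>S\<subseteq>R. card (R - S) \<le> card C \<and> (\<exists>a. (\<forall>i\<in>S. a i \<in> C \<and> real (w i) \<le> cw (a i)) \<and>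
        (\<forall>c\<in>C. real (\<Sum>i\<in>{i\<in>S. a i = c}. h i) \<le> ch c)))"
  using assms
proof (induction C rule: finite_ranking_induct[where f = cw])
  case empty
  show ?case
  proof (intro allI impI)
    fix R n assume "finite R" "\<forall>i\<in>R. 0 < h i" "valid R {} w h cw ch n"
    then have "R = {}" unfolding valid_def by auto
    then show "\<exists>S\<subseteq>R. card (R - S) \<le> card {} \<and> (\<exists>a. (\<forall>i\<in>S. a i \<in> {} \<and> real (w i) \<le> cw (a i)) \<and>
        (\<forall>c\<in>{}. real (\<Sum>i\<in>{i\<in>S. a i = c}. h i) \<le> ch c))" by auto
  qed
next
  case (insert x C)
  show ?case
  proof (cases "x \<in> C")
    case True
    have "insert x C = C" using True by blast
    then show ?thesis using insert.IH by (simp only:)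
  next
    case xC: False
    show ?thesis
    proof (intro allI impI)
      fix R n assume fR: "finite R" and hpos: "\<forall>i\<in>R. 0 < h i" and v: "valid R (insert x C) w h cw ch n"
      have wx: "\<forall>i\<in>R. real (w i) \<le> cw x"
      proof
        fix i assume i: "i \<in> R"
        have "(\<Sum>c\<in>insert x C. n i c) > 0" using v i hpos unfolding valid_def by auto
        then obtain c where c: "c \<in> insert x C" "0 < n i c"
          using sum_pos_ex by blast
        then have "real (w i) \<le> cw c" using v i unfolding valid_def by auto
        moreover have "cw c \<le> cw x" using c insert.hyps(2) by auto
        ultimately show "real (w i) \<le> cw x" by linarith
      qed
      have chpos: "\<forall>c\<in>insert x C. 0 \<le> ch c"
      proof
        fix c assume "c \<in> insert x C"
        then have "real (\<Sum>i\<in>R. n i c) \<le> ch c" using v unfolding valid_def by auto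
        moreover have "0 \<le> real (\<Sum>i\<in>R. n i c)" by (rule of_nat_0_le_iff)
        ultimately show "0 \<le> ch c" by linarith
      qed
      have chx: "real (\<Sum>i\<in>R. n i x) \<le> ch x" using v unfolding valid_def by auto
      show "\<exists>S\<subseteq>R. card (R - S) \<le> card (insert x C) \<and> (\<exists>a. (\<forall>i\<in>S. a i \<in> insert x C \<and> real (w i) \<le> cw (a i)) \<and>
        (\<forall>c\<in>insert x C. real (\<Sum>i\<in>{i\<in>S. a i = c}. h i) \<le> ch c))"
      proof (cases "real (\<Sum>i\<in>R. h i) \<le> ch x")
        case True
        show ?thesis
        proof (rule exI[of _ R], intro conjI exI[of _ "\<lambda>_. x"])
          show "\<forall>c\<in>insert x C. real (\<Sum>i\<in>{i\<in>R. x = c}. h i) \<le> ch c"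
          proof
            fix c assume c: "c \<in> insert x C"
            show "real (\<Sum>i\<in>{i\<in>R. x = c}. h i) \<le> ch c"
            proof (cases "c = x")
              case True then show ?thesis using \<open>real (\<Sum>i\<in>R. h i) \<le> ch x\<close> by simp
            next
              case False then show ?thesis using chpos c by simp
            qed
          qed
        qed (use wx in auto)
      next
        case False
        have ch0: "0 \<le> ch x" using chpos by auto
        have lt: "ch x < real (\<Sum>i\<in>R. h i)" using False by simp
        obtain T d where Td: "T \<subseteq> R" "d \<in> R - T" "real (\<Sum>i\<in>T. h i) \<le> ch x"
          "ch x < real (\<Sum>i\<in>T. h i) + real (h d)"
          "\<forall>i\<in>insert d T. \<forall>j\<in>R - insert d T. w j \<le> w i"
          using greedy[OF fR, of h w, rule_format, OF ch0 lt] by blast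
        define D where "D = insert d T"
        have fT: "finite T" using Td(1) fR finite_subset by blast
        have sD: "(\<Sum>i\<in>D. h i) = h d + (\<Sum>i\<in>T. h i)" unfolding D_def using fT Td(2) by simp
        have capD: "(\<Sum>i\<in>R. n i x) \<le> (\<Sum>i\<in>D. h i)" using chx Td(4) sD by linarith
        have DR: "D \<subseteq> R" using Td(1,2) D_def by auto
        have wid: "\<forall>c\<in>C. cw c \<le> cw x" using insert.hyps(2) by blast
        have up: "\<forall>i\<in>D. \<forall>j\<in>R-D. w j \<le> w i" using Td(5) unfolding D_def by simp
        obtain n' where v': "valid (R - D) C w h cw ch n'"
          using exchange_aux[OF fR insert.hyps(1) xC wid DR up, rule_format, OF refl capD v] by blast
        have fRD: "finite (R - D)" using fR by simp
        have pRD: "\<forall>i\<in>R-D. 0 < h i" using hpos by simp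
        obtain S' a' where S': "S' \<subseteq> R - D" "card (R - D - S') \<le> card C"
          "\<forall>i\<in>S'. a' i \<in> C \<and> real (w i) \<le> cw (a' i)"
          "\<forall>c\<in>C. real (\<Sum>i\<in>{i\<in>S'. a' i = c}. h i) \<le> ch c"
          using insert.IH[rule_format, OF fRD bspec[OF pRD] v'] by blast
        define a where "a = (\<lambda>i. if i \<in> T then x else a' i)"
        show ?thesis
        proof (rule exI[of _ "S' \<union> T"], intro conjI exI[of _ a])
          show "S' \<union> T \<subseteq> R" using S'(1) Td(1) by auto
          have "R - (S' \<union> T) \<subseteq> insert d (R - D - S')" unfolding D_def by auto
          then have "card (R - (S' \<union> T)) \<le> card (insert d (R - D - S'))"
            using fR by (intro card_mono) auto
          also have "\<dots> \<le> Suc (card (R - D - S'))" by (simp add: card_insert_le_m1)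
          also have "\<dots> \<le> card (insert x C)" using S'(2) xC insert.hyps(1) by simp
          finally show "card (R - (S' \<union> T)) \<le> card (insert x C)" .
          show "\<forall>i\<in>S' \<union> T. a i \<in> insert x C \<and> real (w i) \<le> cw (a i)"
            using S'(3) wx Td(1) unfolding a_def by auto
          show "\<forall>c\<in>insert x C. real (\<Sum>i\<in>{i\<in>S' \<union> T. a i = c}. h i) \<le> ch c"
          proof
            fix c assume c: "c \<in> insert x C"
            show "real (\<Sum>i\<in>{i\<in>S' \<union> T. a i = c}. h i) \<le> ch c"
            proof (cases "c = x")
              case True
              have "{i\<in>S' \<union> T. a i = c} = T" using True S'(3) xC unfolding a_def by auto
              then show ?thesis using Td(3) True by simp
            next
              case False
              then have cC: "c \<in> C" using c by auto
              have "{i\<in>S' \<union> T. a i = c} = {i\<in>S'. a' i = c}"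
                using False S'(1) unfolding a_def D_def by auto
              then show ?thesis using S'(4) cC by simp
            qed
          qed
        qed
      qed
    qed
  qed
qed

lemma card_group:
  fixes g :: "'a \<Rightarrow> 'b"
  assumes "finite A" "finite B" "g ` A \<subseteq> B"
  shows "(\<Sum>b\<in>B. card {x\<in>A. g x = b}) = card A"
  using sum.group[OF assms, of "\<lambda>_. 1::nat"] by simp

lemma horiz:
  fixes m t :: nat and w h :: "nat \<Rightarrow> nat" and cw ch :: "nat \<Rightarrow> real"
  assumes pos: "\<forall>i<m. 0 < h i"
    and hp: "horiz_packable (hslices m h) (\<lambda>(i, j). w i) (\<lambda>_. 1) t cw ch"
  shows "\<exists>S \<subseteq> {..<m}. card ({..<m} - S) \<le> t \<and> horiz_packable S w h t cw ch"
proof -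
  obtain a where a1: "\<forall>s\<in>hslices m h. a s < t \<and> real ((\<lambda>(i, j). w i) s) \<le> cw (a s)"
    and a2: "\<forall>c<t. real (\<Sum>s\<in>{s\<in>hslices m h. a s = c}. (\<lambda>_. 1::nat) s) \<le> ch c"
    using hp unfolding horiz_packable_def by blast
  define n where "n = (\<lambda>i c. card {j\<in>{..<h i}. a (i, j) = c})"
  have fH: "finite (hslices m h)"
  proof -
    have "hslices m h \<subseteq> {..<m} \<times> {..<Max (h ` {..<m})}"
      unfolding hslices_def by (auto intro: less_le_trans[OF _ Max_ge])
    then show ?thesis by (rule finite_subset) simp
  qed
  have mem: "\<And>i j. (i, j) \<in> hslices m h \<longleftrightarrow> i < m \<and> j < h i" unfolding hslices_def by simp
  have v: "valid {..<m} {..<t} w h cw ch n"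
    unfolding valid_def
  proof (intro conjI ballI impI)
    fix i assume i: "i \<in> {..<m}"
    have "(\<lambda>j. a (i, j)) ` {..<h i} \<subseteq> {..<t}" using a1 i mem by auto
    then show "(\<Sum>c\<in>{..<t}. n i c) = h i"
      unfolding n_def using card_group[of "{..<h i}" "{..<t}" "\<lambda>j. a (i, j)"] by simp
  next
    fix i c assume i: "i \<in> {..<m}" and c: "c \<in> {..<t}" and p: "0 < n i c"
    then obtain j where j: "j < h i" "a (i, j) = c" unfolding n_def
      by (metis (mono_tags, lifting) card.empty empty_Collect_eq lessThan_iff less_irrefl)
    then show "real (w i) \<le> cw c" using a1 mem i by fastforce
  next
    fix c assume c: "c \<in> {..<t}"
    let ?Hc = "{s\<in>hslices m h. a s = c}"
    have fHc: "finite ?Hc" using fH by simp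
    have "card ?Hc = (\<Sum>i\<in>{..<m}. card {s\<in>?Hc. fst s = i})"
      using card_group[OF fHc, of "{..<m}" fst] mem by (force simp: hslices_def)
    also have "\<dots> = (\<Sum>i\<in>{..<m}. n i c)"
    proof (intro sum.cong refl)
      fix i assume i: "i \<in> {..<m}"
      have "{s\<in>?Hc. fst s = i} = Pair i ` {j\<in>{..<h i}. a (i, j) = c}"
        using i by (auto simp: hslices_def)
      then show "card {s\<in>?Hc. fst s = i} = n i c"
        unfolding n_def by (simp add: card_image inj_on_def)
    qed
    finally have "(\<Sum>i\<in>{..<m}. n i c) = card ?Hc" by simp
    moreover have "real (card ?Hc) \<le> ch c" using a2 c by simp
    ultimately show "real (\<Sum>i\<in>{..<m}. n i c) \<le> ch c" by simp
  qed
  have pm: "\<forall>i\<in>{..<m}. 0 < h i" using pos by simp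
  obtain S a' where S: "S \<subseteq> {..<m}" "card ({..<m} - S) \<le> card {..<t}"
    "\<forall>i\<in>S. a' i \<in> {..<t} \<and> real (w i) \<le> cw (a' i)"
    "\<forall>c\<in>{..<t}. real (\<Sum>i\<in>{i\<in>S. a' i = c}. h i) \<le> ch c"
    using main[OF finite_lessThan[of t], rule_format, OF finite_lessThan bspec[OF pm] v] by blast
  have "horiz_packable S w h t cw ch"
    unfolding horiz_packable_def using S(3,4) by (intro exI[of _ a']) auto
  then show ?thesis using S(1,2) by auto
qed

lemma vh: "vert_packable I wd ht t cw ch = horiz_packable I ht wd t ch cw"
  by (simp add: vert_packable_def horiz_packable_def)

theorem lemma11:
  fixes m t :: nat and w h :: "nat \<Rightarrow> nat" and cw ch :: "nat \<Rightarrow> real"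
  assumes pos: "\<forall>i<m. 0 < w i \<and> 0 < h i"
  shows "(horiz_packable (hslices m h) (\<lambda>(i, j). w i) (\<lambda>_. 1) t cw ch \<longrightarrow>
            (\<exists>S \<subseteq> {..<m}. card ({..<m} - S) \<le> t \<and> horiz_packable S w h t cw ch))
       \<and> (vert_packable (hslices m w) (\<lambda>_. 1) (\<lambda>(i, j). h i) t cw ch \<longrightarrow>
            (\<exists>S \<subseteq> {..<m}. card ({..<m} - S) \<le> t \<and> vert_packable S w h t cw ch))"
proof (intro conjI impI)
  assume "horiz_packable (hslices m h) (\<lambda>(i, j). w i) (\<lambda>_. 1) t cw ch"
  then show "\<exists>S \<subseteq> {..<m}. card ({..<m} - S) \<le> t \<and> horiz_packable S w h t cw ch"
    using horiz[of m h w t cw ch] pos by blast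
next
  assume "vert_packable (hslices m w) (\<lambda>_. 1) (\<lambda>(i, j). h i) t cw ch"
  then have "horiz_packable (hslices m w) (\<lambda>(i, j). h i) (\<lambda>_. 1) t ch cw" by (simp add: vh)
  then have "\<exists>S \<subseteq> {..<m}. card ({..<m} - S) \<le> t \<and> horiz_packable S h w t ch cw"
    using horiz[of m w h t ch cw] pos by blast
  then show "\<exists>S \<subseteq> {..<m}. card ({..<m} - S) \<le> t \<and> vert_packable S w h t cw ch"
    by (simp add: vh)
qed

end
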